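(* Let $Y\in\mathbb R^n$. For $t\ge0$ let $M(t)\in\mathbb R^{n\times n}$ be symmetric positive semidefinite with continuously differentiable orthonormal eigenvectors $v_1(t),\dots,v_n(t)$ and eigenvalues $\lambda_i(t)$, i.e. $M(t)v_i(t)=\lambda_i(t)v_i(t)$. Let $D(t)$ solve $\frac{dD}{dt}=-M(t)D(t)$ with $D(0)=-Y$, and set $F(t)=D(t)+Y$. Assume $D(0)^\top v_i(0)>0$ for all $i$, and that for all $t\ge0$ and all $i$, $$F(t)^\top\frac{dv_i(t)}{dt}<\lambda_i(t)\,D(t)^\top v_i(t).$$ Let $t_1=\inf\{t\ge0:\ D(t)^\top v_i(t)\le0\text{ for some }i\}$. Then $D(t)^\top F(t)<0$ for all $0<t<t_1$.
   Context: Here $D$ plays the role of the residual vector and $F$ of the network output vector under gradient flow. *)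

theory Defs
  imports "HOL-Analysis.Analysis"
begin

end

theory Submission
  imports Defs
begin

lemma expand_onb:
  fixes w :: "'n \<Rightarrow> real ^ 'n"
  assumes on: "\<And>i j. w i \<bullet> w j = (if i = j then 1 else 0)"
  shows "x \<bullet> y = (\<Sum>i\<in>UNIV. (x \<bullet> w i) * (y \<bullet> w i))"
proof -
  define V :: "real^'n^'n" where "V = (\<chi> i. w i)"
  have "V ** transpose V = mat 1"
    using on by (simp add: vec_eq_iff V_def matrix_matrix_mult_def transpose_def mat_def inner_vec_def)
  hence tv: "transpose V ** V = mat 1" using matrix_left_right_inverse by blast
  have "x \<bullet> y = x \<bullet> ((transpose V ** V) *v y)" by (simp add: tv)
  also have "\<dots> = x \<bullet> (transpose V *v (V *v y))" by (simp add: matrix_vector_mul_assoc)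
  also have "\<dots> = (x v* transpose V) \<bullet> (V *v y)" by (simp only: dot_lmul_matrix)
  also have "\<dots> = (V *v x) \<bullet> (V *v y)" by simp
  also have "\<dots> = (\<Sum>i\<in>UNIV. (x \<bullet> w i) * (y \<bullet> w i))"
    by (simp add: inner_vec_def matrix_vector_mult_def V_def mult.commute)
  finally show ?thesis .
qed

lemma matT_inner:
  fixes A :: "real^'n^'n"
  shows "(A *v x) \<bullet> y = x \<bullet> (transpose A *v y)"
  by (metis dot_lmul_matrix inner_commute transpose_matrix_vector)

theorem mainTheorem10:
  fixes Y :: "real ^ 'n"
    and M :: "real \<Rightarrow> real ^ 'n ^ 'n"
    and v v' :: "'n \<Rightarrow> real \<Rightarrow> real ^ 'n"
    and lam :: "'n \<Rightarrow> real \<Rightarrow> real"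
    and D F :: "real \<Rightarrow> real ^ 'n"
  assumes symM: "\<And>t. t \<ge> 0 \<Longrightarrow> transpose (M t) = M t"
    and psdM: "\<And>t x. t \<ge> 0 \<Longrightarrow> 0 \<le> x \<bullet> (M t *v x)"
    and v_deriv: "\<And>i t. t \<ge> 0 \<Longrightarrow> (v i has_vector_derivative v' i t) (at t within {0..})"
    and v'_cont: "\<And>i. continuous_on {0..} (v' i)"
    and orthonormal: "\<And>i j t. t \<ge> 0 \<Longrightarrow> v i t \<bullet> v j t = (if i = j then 1 else 0)"
    and eigen: "\<And>i t. t \<ge> 0 \<Longrightarrow> M t *v v i t = lam i t *\<^sub>R v i t"
    and D_ode: "\<And>t. t \<ge> 0 \<Longrightarrow> (D has_vector_derivative (- (M t *v D t))) (at t within {0..})"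
    and D0: "D 0 = - Y"
    and F_def: "\<And>t. F t = D t + Y"
    and init_pos: "\<And>i. D 0 \<bullet> v i 0 > 0"
    and cond: "\<And>i t. t \<ge> 0 \<Longrightarrow> F t \<bullet> v' i t < lam i t * (D t \<bullet> v i t)"
  shows "\<forall>t. 0 < t \<and> ereal t < Inf (ereal ` {s. s \<ge> 0 \<and> (\<exists>i. D s \<bullet> v i s \<le> 0)})
           \<longrightarrow> D t \<bullet> F t < 0"
proof (intro allI impI)
  fix t assume h: "0 < t \<and> ereal t < Inf (ereal ` {s. s \<ge> 0 \<and> (\<exists>i. D s \<bullet> v i s \<le> 0)})"
  have Dpos: "D t \<bullet> v i t > 0" for i
  proof (rule ccontr)
    assume "\<not> ?thesis"
    hence "t \<in> {s. s \<ge> 0 \<and> (\<exists>i. D s \<bullet> v i s \<le> 0)}" using h by (auto simp: not_less)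
    hence "Inf (ereal ` {s. s \<ge> 0 \<and> (\<exists>i. D s \<bullet> v i s \<le> 0)}) \<le> ereal t"
      by (intro Inf_lower) auto
    thus False using h by (meson not_less)
  qed
  have Fneg: "F t \<bullet> v i t < 0" for i
  proof -
    define g where "g s = F s \<bullet> v i s" for s
    have Fd: "(F has_vector_derivative (- (M s *v D s))) (at s within {0..})" if "s \<ge> 0" for s
    proof -
      have "((\<lambda>s. D s + Y) has_vector_derivative (- (M s *v D s) + 0)) (at s within {0..})"
        by (intro derivative_intros D_ode that)
      thus ?thesis by (simp add: F_def[abs_def])
    qed
    have gd: "(g has_derivative (\<lambda>h. F s \<bullet> (h *\<^sub>R v' i s) + (h *\<^sub>R (- (M s *v D s))) \<bullet> v i s))
        (at s within {0..t})" if "0 \<le> s" "s \<le> t" for s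
    proof -
      have "(g has_derivative (\<lambda>h. F s \<bullet> (h *\<^sub>R v' i s) + (h *\<^sub>R (- (M s *v D s))) \<bullet> v i s))
        (at s within {0..})"
        unfolding g_def
        using has_derivative_inner[OF Fd[OF that(1), unfolded has_vector_derivative_def]
            v_deriv[OF that(1), unfolded has_vector_derivative_def]] by simp
      thus ?thesis by (rule has_derivative_subset) auto
    qed
    obtain x where x: "x \<in> {0<..<t}" and eq: "g t - g 0 =
        F x \<bullet> ((t - 0) *\<^sub>R v' i x) + ((t - 0) *\<^sub>R (- (M x *v D x))) \<bullet> v i x"
      using mvt_simple[of 0 t g, OF _ gd] h by auto
    have x0: "x \<ge> 0" using x by auto
    have "(M x *v D x) \<bullet> v i x = D x \<bullet> (M x *v v i x)"
      using matT_inner[of "M x" "D x" "v i x"] symM[OF x0] by simp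
    also have "\<dots> = lam i x * (D x \<bullet> v i x)" using eigen[OF x0] by simp
    finally have mv: "(M x *v D x) \<bullet> v i x = lam i x * (D x \<bullet> v i x)" .
    have g0: "g 0 = 0" using D0 F_def[of 0] by (simp add: g_def)
    have "g t = t * (F x \<bullet> v' i x - lam i x * (D x \<bullet> v i x))"
      using eq g0 mv by (simp add: algebra_simps inner_minus_left)
    moreover have "F x \<bullet> v' i x - lam i x * (D x \<bullet> v i x) < 0" using cond[OF x0] by simp
    ultimately have "g t < 0" using h by (simp add: mult_pos_neg)
    thus ?thesis by (simp add: g_def)
  qed
  have "D t \<bullet> F t = (\<Sum>i\<in>UNIV. (D t \<bullet> v i t) * (F t \<bullet> v i t))"
    by (rule expand_onb) (use orthonormal h in auto)
  also have "\<dots> < (\<Sum>i\<in>(UNIV::'n set). 0)"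
    by (rule sum_strict_mono) (use Dpos Fneg in \<open>auto simp: mult_pos_neg\<close>)
  also have "\<dots> = 0" by simp
  finally show "D t \<bullet> F t < 0" .
qed

end
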